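(* Let $\Gamma=\langle N,H,P,(u_i)_{i\in N}\rangle$ be an extensive game with perfect information with $N=\{1,\ldots,n\}$, and let $\mathcal{G}_\Gamma$ be the GAL-structure for $\Gamma$ described in the context. Let \[\alpha \;=\; [AG]\Big(\textstyle\bigwedge_{i\in N}\, i\rightarrow \forall v_{s_i}\big(u_i(O_h(h,v^*_{s_1},\ldots,v^*_{s_n}))\geq u_i(O_h(h,v^*_{s_1},\ldots,v_{s_i},\ldots,v^*_{s_n}))\big)\Big)\] and \[\beta \;=\; [EG]\Big( h\in O(v^*_{s_1},\ldots,v^*_{s_n}) \;\wedge\; \textstyle\bigwedge_{i\in N}\, i\rightarrow \forall v_{s_i}\big(u_i(O_h(h,v^*_{s_1},\ldots,v^*_{s_n}))\geq u_i(O_h(h,v^*_{s_1},\ldots,v_{s_i},\ldots,v^*_{s_n}))\big)\Big).\] Let $s^*=(s^*_1,\ldots,s^*_n)$ be a strategy profile and let $(\sigma_{S_i})_{i\in N}$ be valuations with $\sigma_{S_i}(v^*_{s_i})=s^*_i$ for each $i$. Then: (1) $s^*$ is a subgame perfect equilibrium of $\Gamma$ if and only if $\mathcal{G}_\Gamma,(\sigma_{S_i})\models_{\emptyset}\alpha$; (2) $s^*$ is a Nash equilibrium of $\Gamma$ if and only if $\mathcal{G}_\Gamma,(\sigma_{S_i})\models_{\emptyset}\beta$.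
   Context: An extensive game with perfect information is a tuple $\langle N,H,P,(u_i)\rangle$: $N$ a set of players; $H$ a set of (finite or infinite) sequences of actions (histories) such that the empty sequence $\emptyset\in H$, $H$ is closed under taking initial segments, and if every finite initial segment of an infinite sequence is in $H$ then so is the infinite sequence. A history is terminal if it is infinite or there is no action $a$ with $(h,a)\in H$; $T$ is the set of terminal histories. $P$ assigns a player to each non-terminal history, and each $u_i:T\to U$ is a real-valued (utility) function. A strategy of player $i$ is a function assigning to each non-terminal history $h$ with $P(h)=i$ an action $a$ with $(h,a)\in H$; $S_i$ is the set of player $i$'s strategies. For a history $h$ and a profile $s=(s_1,\dots,s_n)$, $O_h(h,s_1,\ldots,s_n)$ is the terminal history obtained by starting at $h$ and letting each player follow his strategy; $O(s)=O_h(\emptyset,s)$ is the outcome. A profile $s^*$ is a subgame perfect equilibrium (SPE) if for every player $i$, every history $h\in H$ with $P(h)=i$ and every $s_i\in S_i$: $u_i(O_h(h,s^*_1,\ldots,s^*_n))\geq u_i(O_h(h,s^*_1,\ldots,s_i,\ldots,s^*_n))$. A profile $s^*$ is a Nash equilibrium (NE) if the same inequality holds for every player $i$, every $s_i\in S_i$ and every history $h$ on the path of $s^*$ (i.e. $h$ is an initial segment of $O(s^* )$) with $P(h)=i$. The GAL-structure $\mathcal{G}_\Gamma$: its states are the histories $h\in H$, the initial state is $\emptyset$; the transition (action) relation is $\mathcal{CA}=\{\langle h,(h,a)\rangle : (h,a)\in H\}$; at each state $h$ the set of players to move is $N_h=\{P(h)\}$ if $h$ is non-terminal and $N_h=\emptyset$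 otherwise. It is many-sorted with sorts $H$ (domain $H$), $T$ (domain $T$), $S_i$ (domain $S_i$, the strategies of player $i$) and $U$ (utility values); the 0-ary symbol $h$ is non-rigid and at state $h_k$ denotes the history $h_k$ itself; $u_i$, $O$, $O_h$ and $\geq$ are interpreted rigidly (same at every state) as in $\Gamma$, and "$h\in O(\ldots)$" holds at a state $h_k$ iff $h_k$ is an initial segment of (lies on) the outcome $O(\ldots)$. Semantics: the atomic formula $i$ (a player) holds at state $e$ iff $i\in N_e$; $\forall v_{s_i}\varphi$ holds iff $\varphi$ holds for every value of $v_{s_i}$ in $S_i$; Boolean connectives as usual. A path from $e$ is a maximal sequence of states starting at $e$ along $\mathcal{CA}$: either infinite, or finite ending in a state with no successor. $[AG]\varphi$ holds at $e$ iff $\varphi$ holds at every state of every path from $e$; $[EG]\varphi$ holds at $e$ iff there is a path from $e$ every state of which satisfies $\varphi$. $\mathcal{G},(\sigma)\models_e\varphi$ means state $e$ satisfies $\varphi$ under valuation $\sigma$ of the free variables. *)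

theory Defs
  imports Complex_Main
begin

datatype 'a hist = HFin "'a list" | HInf "nat \<Rightarrow> 'a"

definition nonterm :: "'a hist set \<Rightarrow> 'a list \<Rightarrow> bool" where
  "nonterm H h \<longleftrightarrow> HFin h \<in> H \<and> (\<exists>a. HFin (h @ [a]) \<in> H)"

definition terminal :: "'a hist set \<Rightarrow> 'a hist \<Rightarrow> bool" where
  "terminal H g \<longleftrightarrow> g \<in> H \<and> (case g of HInf _ \<Rightarrow> True | HFin h \<Rightarrow> \<not> (\<exists>a. HFin (h @ [a]) \<in> H))"

text \<open>Utilities are arbitrary real functions
  u :: nat => 'a hist => real (only their values on T matter).\<close>
definition ext_game :: "nat \<Rightarrow> 'a hist set \<Rightarrow> ('a list \<Rightarrow> nat) \<Rightarrow> bool" where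
  "ext_game n H P \<longleftrightarrow>
     HFin [] \<in> H
   \<and> (\<forall>xs ys. HFin (xs @ ys) \<in> H \<longrightarrow> HFin xs \<in> H)
   \<and> (\<forall>f. HInf f \<in> H \<longleftrightarrow> (\<forall>k. HFin (map f [0..<k]) \<in> H))
   \<and> (\<forall>h. nonterm H h \<longrightarrow> P h \<in> {1..n})"

definition strategies :: "'a hist set \<Rightarrow> ('a list \<Rightarrow> nat) \<Rightarrow> nat \<Rightarrow> ('a list \<Rightarrow> 'a) set" where
  "strategies H P i = {f. \<forall>h. nonterm H h \<and> P h = i \<longrightarrow> HFin (h @ [f h]) \<in> H}"

type_synonym 'a profile = "nat \<Rightarrow> 'a list \<Rightarrow> 'a"

definition step :: "'a hist set \<Rightarrow> ('a list \<Rightarrow> nat) \<Rightarrow> 'a profile \<Rightarrow> 'a list \<Rightarrow> 'a list" where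
  "step H P s h = (if nonterm H h then h @ [s (P h) h] else h)"

definition run :: "'a hist set \<Rightarrow> ('a list \<Rightarrow> nat) \<Rightarrow> 'a profile \<Rightarrow> 'a list \<Rightarrow> nat \<Rightarrow> 'a list" where
  "run H P s h k = (step H P s ^^ k) h"

definition Oh :: "'a hist set \<Rightarrow> ('a list \<Rightarrow> nat) \<Rightarrow> 'a hist \<Rightarrow> 'a profile \<Rightarrow> 'a hist" where
  "Oh H P g s = (case g of
      HInf f \<Rightarrow> HInf f
    | HFin h \<Rightarrow> (if \<exists>k. \<not> nonterm H (run H P s h k)
               then HFin (run H P s h (LEAST k. \<not> nonterm H (run H P s h k)))
               else HInf (\<lambda>j. run H P s h (Suc j) ! j)))"

definition Out :: "'a hist set \<Rightarrow> ('a list \<Rightarrow> nat) \<Rightarrow> 'a profile \<Rightarrow> 'a hist" where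
  "Out H P s = Oh H P (HFin []) s"

fun init_seg :: "'a hist \<Rightarrow> 'a hist \<Rightarrow> bool" where
  "init_seg (HFin xs) (HFin ys) \<longleftrightarrow> (\<exists>zs. ys = xs @ zs)"
| "init_seg (HFin xs) (HInf f) \<longleftrightarrow> xs = map f [0..<length xs]"
| "init_seg (HInf f) (HInf g) \<longleftrightarrow> f = g"
| "init_seg (HInf f) (HFin ys) \<longleftrightarrow> False"

definition SPE :: "nat \<Rightarrow> 'a hist set \<Rightarrow> ('a list \<Rightarrow> nat) \<Rightarrow> (nat \<Rightarrow> 'a hist \<Rightarrow> real) \<Rightarrow> 'a profile \<Rightarrow> bool" where
  "SPE n H P u s \<longleftrightarrow>
     (\<forall>i\<in>{1..n}. \<forall>h. nonterm H h \<and> P h = i \<longrightarrow>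
        (\<forall>t\<in>strategies H P i. u i (Oh H P (HFin h) s) \<ge> u i (Oh H P (HFin h) (s(i := t)))))"

definition NE :: "nat \<Rightarrow> 'a hist set \<Rightarrow> ('a list \<Rightarrow> nat) \<Rightarrow> (nat \<Rightarrow> 'a hist \<Rightarrow> real) \<Rightarrow> 'a profile \<Rightarrow> bool" where
  "NE n H P u s \<longleftrightarrow>
     (\<forall>i\<in>{1..n}. \<forall>h. nonterm H h \<and> P h = i \<and> init_seg (HFin h) (Out H P s) \<longrightarrow>
        (\<forall>t\<in>strategies H P i. u i (Oh H P (HFin h) s) \<ge> u i (Oh H P (HFin h) (s(i := t)))))"

definition CA :: "'a hist set \<Rightarrow> 'a hist \<Rightarrow> 'a hist \<Rightarrow> bool" where
  "CA H g g' \<longleftrightarrow> (\<exists>h a. g = HFin h \<and> g' = HFin (h @ [a]) \<and> g' \<in> H)"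

definition movers :: "'a hist set \<Rightarrow> ('a list \<Rightarrow> nat) \<Rightarrow> 'a hist \<Rightarrow> nat set" where
  "movers H P g = (case g of HFin h \<Rightarrow> (if nonterm H h then {P h} else {}) | HInf _ \<Rightarrow> {})"

definition inf_path :: "'a hist set \<Rightarrow> 'a hist \<Rightarrow> (nat \<Rightarrow> 'a hist) \<Rightarrow> bool" where
  "inf_path H e p \<longleftrightarrow> p 0 = e \<and> (\<forall>k. CA H (p k) (p (Suc k)))"

definition fin_path :: "'a hist set \<Rightarrow> 'a hist \<Rightarrow> 'a hist list \<Rightarrow> bool" where
  "fin_path H e ps \<longleftrightarrow> ps \<noteq> [] \<and> hd ps = e
     \<and> (\<forall>k. Suc k < length ps \<longrightarrow> CA H (ps ! k) (ps ! Suc k))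
     \<and> \<not> (\<exists>g'. CA H (last ps) g')"

definition AG :: "'a hist set \<Rightarrow> ('a hist \<Rightarrow> bool) \<Rightarrow> 'a hist \<Rightarrow> bool" where
  "AG H \<phi> e \<longleftrightarrow> (\<forall>p. inf_path H e p \<longrightarrow> (\<forall>k. \<phi> (p k)))
                \<and> (\<forall>ps. fin_path H e ps \<longrightarrow> (\<forall>x\<in>set ps. \<phi> x))"

definition EG :: "'a hist set \<Rightarrow> ('a hist \<Rightarrow> bool) \<Rightarrow> 'a hist \<Rightarrow> bool" where
  "EG H \<phi> e \<longleftrightarrow> (\<exists>p. inf_path H e p \<and> (\<forall>k. \<phi> (p k)))
                \<or> (\<exists>ps. fin_path H e ps \<and> (\<forall>x\<in>set ps. \<phi> x))"

text \<open>Semantics at state g, under valuation v*_{s_i} := s i, of the common subformula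
  /\_{i in N} (i --> forall v_{s_i}. u_i(O_h(h, v*)) >= u_i(O_h(h, v*_{-i}, v_{s_i}))).\<close>
definition eq_body :: "nat \<Rightarrow> 'a hist set \<Rightarrow> ('a list \<Rightarrow> nat) \<Rightarrow> (nat \<Rightarrow> 'a hist \<Rightarrow> real)
    \<Rightarrow> 'a profile \<Rightarrow> 'a hist \<Rightarrow> bool" where
  "eq_body n H P u s g \<longleftrightarrow>
     (\<forall>i\<in>{1..n}. i \<in> movers H P g \<longrightarrow>
        (\<forall>t\<in>strategies H P i. u i (Oh H P g s) \<ge> u i (Oh H P g (s(i := t)))))"

definition sat_alpha :: "nat \<Rightarrow> 'a hist set \<Rightarrow> ('a list \<Rightarrow> nat) \<Rightarrow> (nat \<Rightarrow> 'a hist \<Rightarrow> real) \<Rightarrow> 'a profile \<Rightarrow> bool" where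
  "sat_alpha n H P u s \<longleftrightarrow> AG H (eq_body n H P u s) (HFin [])"

definition sat_beta :: "nat \<Rightarrow> 'a hist set \<Rightarrow> ('a list \<Rightarrow> nat) \<Rightarrow> (nat \<Rightarrow> 'a hist \<Rightarrow> real) \<Rightarrow> 'a profile \<Rightarrow> bool" where
  "sat_beta n H P u s \<longleftrightarrow>
     EG H (\<lambda>g. init_seg g (Out H P s) \<and> eq_body n H P u s g) (HFin [])"

end

theory Submission
  imports Defs
begin

lemma eq_body_HInf: "eq_body n H P u s (HInf f)"
  by (simp add: eq_body_def movers_def)

lemma eq_body_HFin:
  assumes "ext_game n H P"
  shows "eq_body n H P u s (HFin h) \<longleftrightarrow> (nonterm H h \<longrightarrow>
     (\<forall>t\<in>strategies H P (P h). u (P h) (Oh H P (HFin h) s) \<ge> u (P h) (Oh H P (HFin h) (s(P h := t)))))"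
  using assms by (auto simp: eq_body_def movers_def ext_game_def)

lemma SPE_iff:
  assumes "ext_game n H P"
  shows "SPE n H P u s \<longleftrightarrow> (\<forall>g. eq_body n H P u s g)"
proof
  assume a: "SPE n H P u s"
  show "\<forall>g. eq_body n H P u s g"
  proof
    fix g show "eq_body n H P u s g"
    proof (cases g)
      case (HFin h) then show ?thesis using a assms
        by (auto simp: eq_body_HFin SPE_def ext_game_def)
    qed (simp add: eq_body_HInf)
  qed
next
  assume "\<forall>g. eq_body n H P u s g"
  then show "SPE n H P u s" using assms
    by (auto simp: eq_body_HFin SPE_def) (metis eq_body_HFin assms)
qed

lemma prefix_closed: "ext_game n H P \<Longrightarrow> HFin (xs @ ys) \<in> H \<Longrightarrow> HFin xs \<in> H"
  unfolding ext_game_def by blast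

lemma take_in: "ext_game n H P \<Longrightarrow> HFin h \<in> H \<Longrightarrow> HFin (take k h) \<in> H"
  by (metis append_take_drop_id prefix_closed)

lemma reach:
  assumes g: "ext_game n H P" and hH: "HFin h \<in> H"
  shows "(\<exists>p. inf_path H (HFin []) p \<and> (\<exists>k. p k = HFin h))
       \<or> (\<exists>ps. fin_path H (HFin []) ps \<and> HFin h \<in> set ps)"
proof -
  define succ where "succ x \<longleftrightarrow> (\<exists>a. HFin (x @ [a]) \<in> H)" for x
  define ext where "ext x = (if succ x then x @ [SOME a. HFin (x @ [a]) \<in> H] else x)" for x
  define q where "q k = (ext ^^ k) h" for k
  define r where "r k = (if k \<le> length h then take k h else q (k - length h))" for k
  have qH: "HFin (q k) \<in> H" for k
  proof (induction k)
    case 0 then show ?case using hH by (simp add: q_def)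
  next
    case (Suc k)
    have "q (Suc k) = ext (q k)" by (simp add: q_def)
    then show ?case using Suc unfolding ext_def succ_def
      by (auto intro: someI_ex)
  qed
  have rH: "HFin (r k) \<in> H" for k
    using qH take_in[OF g hH] by (simp add: r_def)
  have r0: "r 0 = []" by (simp add: r_def q_def)
  have rlen: "r (length h) = h" by (simp add: r_def)
  have CAr: "succ (r k) \<Longrightarrow> CA H (HFin (r k)) (HFin (r (Suc k)))" for k
  proof (cases "k < length h")
    case True
    have "r (Suc k) = take k h @ [h ! k]" using True by (simp add: r_def take_Suc_conv_app_nth)
    moreover have "r k = take k h" using True by (simp add: r_def)
    ultimately show ?thesis using rH[of "Suc k"] by (auto simp: CA_def)
  next
    case False
    assume sk: "succ (r k)"
    have "Suc k - length h = Suc (k - length h)" using False by simp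
    have rk: "r k = q (k - length h)"
    proof (cases "k = length h")
      case True then show ?thesis by (simp add: r_def q_def)
    qed (use False in \<open>simp add: r_def\<close>)
    have "r (Suc k) = q (Suc (k - length h))" using False \<open>Suc k - length h = Suc (k - length h)\<close>
      by (simp add: r_def)
    then have "r (Suc k) = ext (r k)" using rk by (simp add: q_def)
    then have "r (Suc k) = r k @ [SOME a. HFin (r k @ [a]) \<in> H]" using sk by (simp add: ext_def)
    then show ?thesis using rH[of "Suc k"] by (auto simp: CA_def)
  qed
  have succ_lt: "k < length h \<Longrightarrow> succ (r k)" for k
    using rH[of "Suc k"] by (auto simp: succ_def r_def take_Suc_conv_app_nth)
  show ?thesis
  proof (cases "\<forall>k. succ (r k)")
    case True
    have "inf_path H (HFin []) (\<lambda>k. HFin (r k))" using True CAr r0 by (simp add: inf_path_def)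
    then show ?thesis using rlen by blast
  next
    case False
    define m where "m = (LEAST k. \<not> succ (r k))"
    have nm: "\<not> succ (r m)" using False unfolding m_def by (metis (mono_tags) LeastI)
    have lt: "k < m \<Longrightarrow> succ (r k)" for k unfolding m_def using not_less_Least by blast
    have mge: "length h \<le> m" using nm succ_lt by (meson not_le)
    define ps where "ps = map (\<lambda>k. HFin (r k)) [0..<Suc m]"
    have "fin_path H (HFin []) ps"
      unfolding fin_path_def ps_def
    proof (intro conjI allI impI)
      show "hd (map (\<lambda>k. HFin (r k)) [0..<Suc m]) = HFin []"
        by (simp add: r0 hd_map del: upt_Suc)
      fix k assume "Suc k < length (map (\<lambda>k. HFin (r k)) [0..<Suc m])"
      then have "k < m" by simp
      then show "CA H (map (\<lambda>k. HFin (r k)) [0..<Suc m] ! k) (map (\<lambda>k. HFin (r k)) [0..<Suc m] ! Suc k)"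
        using CAr lt by (simp del: upt_Suc)
    next
      have "last (map (\<lambda>k. HFin (r k)) [0..<Suc m]) = HFin (r m)" by simp
      then show "\<not> (\<exists>g'. CA H (last (map (\<lambda>k. HFin (r k)) [0..<Suc m])) g')"
        using nm by (auto simp: CA_def succ_def)
    qed simp
    moreover have "HFin h \<in> set ps" using mge rlen unfolding ps_def
      by (simp del: upt_Suc) (metis atLeastLessThan_iff le_imp_less_Suc zero_le image_eqI)
    ultimately show ?thesis by blast
  qed
qed


lemma run_Suc: "run H P s h (Suc k) = step H P s (run H P s h k)"
  by (simp add: run_def)

lemma run_0: "run H P s h 0 = h"
  by (simp add: run_def)

lemma run_H:
  assumes g: "ext_game n H P" and st: "\<forall>i\<in>{1..n}. s i \<in> strategies H P i"
  shows "HFin (run H P s [] k) \<in> H"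
proof (induction k)
  case 0 then show ?case using g by (simp add: run_0 ext_game_def)
next
  case (Suc k)
  let ?x = "run H P s [] k"
  show ?case
  proof (cases "nonterm H ?x")
    case True
    then have "P ?x \<in> {1..n}" using g by (simp add: ext_game_def)
    then have "s (P ?x) \<in> strategies H P (P ?x)" using st by blast
    then show ?thesis using True by (simp add: run_Suc step_def strategies_def)
  qed (use Suc in \<open>simp add: run_Suc step_def\<close>)
qed

lemma run_prefix: "j \<le> k \<Longrightarrow> \<exists>zs. run H P s h k = run H P s h j @ zs"
proof (induction k)
  case 0 then show ?case by simp
next
  case (Suc k)
  show ?case
  proof (cases "j = Suc k")
    case False
    then obtain zs where "run H P s h k = run H P s h j @ zs" using Suc by force
    then show ?thesis by (simp add: run_Suc step_def)
  qed simp
qed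

lemma run_len: "(\<forall>j<k. nonterm H (run H P s h j)) \<Longrightarrow> length (run H P s h k) = length h + k"
  by (induction k) (auto simp: run_Suc step_def run_0)

lemma run_map:
  assumes "\<forall>j. nonterm H (run H P s [] j)"
  shows "run H P s [] k = map (\<lambda>j. run H P s [] (Suc j) ! j) [0..<k]"
proof (induction k)
  case 0 then show ?case by (simp add: run_0)
next
  case (Suc k)
  have l: "length (run H P s [] k) = k" using run_len[of k H P s "[]"] assms by simp
  have "run H P s [] (Suc k) = run H P s [] k @ [s (P (run H P s [] k)) (run H P s [] k)]"
    using assms by (simp add: run_Suc step_def)
  then show ?case using Suc l by (simp add: nth_append)
qed

lemma out_path:
  assumes g: "ext_game n H P" and st: "\<forall>i\<in>{1..n}. s i \<in> strategies H P i"
  shows "(\<exists>p. inf_path H (HFin []) p \<and> (\<forall>k. \<exists>x. p k = HFin x \<and> init_seg (p k) (Out H P s)))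
       \<or> (\<exists>ps. fin_path H (HFin []) ps \<and> (\<forall>y\<in>set ps. \<exists>x. y = HFin x \<and> init_seg y (Out H P s)))"
proof -
  let ?R = "run H P s []"
  show ?thesis
  proof (cases "\<exists>k. \<not> nonterm H (?R k)")
    case False
    then have all: "\<forall>j. nonterm H (?R j)" by blast
    have out: "Out H P s = HInf (\<lambda>j. ?R (Suc j) ! j)"
      using False by (simp add: Out_def Oh_def)
    have ca: "CA H (HFin (?R k)) (HFin (?R (Suc k)))" for k
      using all run_H[OF g st, of "Suc k"] by (simp add: CA_def run_Suc step_def)
    have "inf_path H (HFin []) (\<lambda>k. HFin (?R k))" using ca by (simp add: inf_path_def run_0)
    moreover have "init_seg (HFin (?R k)) (Out H P s)" for k
      using out run_map[OF all, of k] by simp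
    ultimately show ?thesis by blast
  next
    case True
    define m where "m = (LEAST k. \<not> nonterm H (?R k))"
    have nm: "\<not> nonterm H (?R m)" using True unfolding m_def by (metis (mono_tags) LeastI)
    have lt: "k < m \<Longrightarrow> nonterm H (?R k)" for k unfolding m_def using not_less_Least by blast
    have out: "Out H P s = HFin (?R m)" using True by (simp add: Out_def Oh_def m_def)
    define ps where "ps = map (\<lambda>k. HFin (?R k)) [0..<Suc m]"
    have "fin_path H (HFin []) ps"
      unfolding fin_path_def ps_def
    proof (intro conjI allI impI)
      show "hd (map (\<lambda>k. HFin (?R k)) [0..<Suc m]) = HFin []"
        by (simp add: run_0 hd_map del: upt_Suc)
      fix k assume "Suc k < length (map (\<lambda>k. HFin (?R k)) [0..<Suc m])"
      then have "k < m" by simp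
      then show "CA H (map (\<lambda>k. HFin (?R k)) [0..<Suc m] ! k) (map (\<lambda>k. HFin (?R k)) [0..<Suc m] ! Suc k)"
        using lt[of k] run_H[OF g st, of "Suc k"] by (simp add: CA_def run_Suc step_def del: upt_Suc)
    next
      have "last (map (\<lambda>k. HFin (?R k)) [0..<Suc m]) = HFin (?R m)" by simp
      moreover have "HFin (?R m) \<in> H" using run_H[OF g st] .
      ultimately show "\<not> (\<exists>g'. CA H (last (map (\<lambda>k. HFin (?R k)) [0..<Suc m])) g')"
        using nm by (auto simp: CA_def nonterm_def)
    qed simp
    moreover have "\<forall>y\<in>set ps. \<exists>x. y = HFin x \<and> init_seg y (Out H P s)"
      unfolding ps_def out using run_prefix[of _ m H P s "[]"] by auto
    ultimately show ?thesis by blast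
  qed
qed

lemma inf_path_len: "inf_path H (HFin []) p \<Longrightarrow> \<exists>xs. p k = HFin xs \<and> length xs = k"
proof (induction k)
  case 0 then show ?case by (simp add: inf_path_def)
next
  case (Suc k)
  then obtain xs where "p k = HFin xs" "length xs = k" by blast
  moreover have "CA H (p k) (p (Suc k))" using Suc.prems by (simp add: inf_path_def)
  ultimately show ?case by (auto simp: CA_def)
qed

lemma fin_path_len: "fin_path H (HFin []) ps \<Longrightarrow> k < length ps \<Longrightarrow> \<exists>xs. ps ! k = HFin xs \<and> length xs = k"
proof (induction k)
  case 0 then show ?case by (cases ps) (auto simp: fin_path_def)
next
  case (Suc k)
  then obtain xs where "ps ! k = HFin xs" "length xs = k" by auto
  moreover have "CA H (ps ! k) (ps ! Suc k)" using Suc.prems by (simp add: fin_path_def)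
  ultimately show ?case by (auto simp: CA_def)
qed

lemma init_seg_same:
  "init_seg (HFin x) g \<Longrightarrow> init_seg (HFin y) g \<Longrightarrow> length x = length y \<Longrightarrow> x = y"
  by (cases g) (auto simp: append_eq_append_conv)

lemma init_seg_take: "init_seg (HFin h) g \<Longrightarrow> init_seg (HFin (take k h)) g"
proof (cases g)
  case (HFin ys)
  assume "init_seg (HFin h) g"
  then obtain zs where "ys = h @ zs" using HFin by auto
  then have "ys = take k h @ (drop k h @ zs)" by simp
  then show ?thesis using HFin by (simp only: init_seg.simps) blast
next
  case (HInf f)
  assume "init_seg (HFin h) g"
  then have "h = map f [0..<length h]" using HInf by simp
  then obtain L where eq: "h = map f [0..<L]" and L: "L = length h" by blast
  have hj: "j < L \<Longrightarrow> h ! j = f j" for j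
    using eq by simp
  have "take k h = map f [0..<length (take k h)]"
    by (rule nth_equalityI) (use L hj in auto)
  then show ?thesis using HInf by simp
qed

theorem theorem1:
  fixes n :: nat and H :: "'a hist set" and P :: "'a list \<Rightarrow> nat"
    and u :: "nat \<Rightarrow> 'a hist \<Rightarrow> real" and s :: "'a profile"
  assumes "ext_game n H P"
    and "\<forall>i\<in>{1..n}. s i \<in> strategies H P i"
  shows "(SPE n H P u s \<longleftrightarrow> sat_alpha n H P u s) \<and> (NE n H P u s \<longleftrightarrow> sat_beta n H P u s)"
proof
  note g = assms(1) and st = assms(2)
  let ?C = "\<lambda>h. (\<forall>t\<in>strategies H P (P h). u (P h) (Oh H P (HFin h) s) \<ge> u (P h) (Oh H P (HFin h) (s(P h := t))))"
  show "SPE n H P u s \<longleftrightarrow> sat_alpha n H P u s"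
  proof
    assume "SPE n H P u s"
    then show "sat_alpha n H P u s" using SPE_iff[OF g] by (simp add: sat_alpha_def AG_def)
  next
    assume a: "sat_alpha n H P u s"
    have "eq_body n H P u s g" for g
    proof (cases g)
      case (HInf f) then show ?thesis by (simp add: eq_body_HInf)
    next
      case (HFin h)
      show ?thesis
      proof (cases "nonterm H h")
        case False then show ?thesis using HFin by (simp add: eq_body_HFin[OF g])
      next
        case True
        then have "HFin h \<in> H" by (simp add: nonterm_def)
        from reach[OF g this] show ?thesis
        proof (elim disjE exE conjE)
          fix p k assume ip: "inf_path H (HFin []) p" and pk: "p k = HFin h"
          have "eq_body n H P u s (p k)" using a ip unfolding sat_alpha_def AG_def by blast
          then show ?thesis using pk HFin by simp
        next
          fix ps assume fp: "fin_path H (HFin []) ps" and hs: "HFin h \<in> set ps"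
          have "\<forall>x\<in>set ps. eq_body n H P u s x" using a fp unfolding sat_alpha_def AG_def by blast
          then show ?thesis using hs HFin by simp
        qed
      qed
    qed
    then show "SPE n H P u s" using SPE_iff[OF g] by blast
  qed
next
  note g = assms(1) and st = assms(2)
  show "NE n H P u s \<longleftrightarrow> sat_beta n H P u s"
  proof
    assume ne: "NE n H P u s"
    have eb: "eq_body n H P u s (HFin x)" if iss: "init_seg (HFin x) (Out H P s)" for x
      unfolding eq_body_HFin[OF g]
    proof (intro impI ballI)
      fix t assume nt: "nonterm H x" and t: "t \<in> strategies H P (P x)"
      have "P x \<in> {1..n}" using g nt by (simp add: ext_game_def)
      then show "u (P x) (Oh H P (HFin x) s) \<ge> u (P x) (Oh H P (HFin x) (s(P x := t)))"
        using ne nt iss t unfolding NE_def by blast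
    qed
    have eb2: "init_seg y (Out H P s) \<and> eq_body n H P u s y" if "\<exists>x. y = HFin x \<and> init_seg y (Out H P s)" for y
      using that eb by blast
    from out_path[OF g st] show "sat_beta n H P u s"
      unfolding sat_beta_def EG_def
    proof (elim disjE exE conjE)
      fix p assume ip: "inf_path H (HFin []) p" and al: "\<forall>k. \<exists>x. p k = HFin x \<and> init_seg (p k) (Out H P s)"
      have "\<forall>k. init_seg (p k) (Out H P s) \<and> eq_body n H P u s (p k)"
        using al eb2 by blast
      then show "(\<exists>p. inf_path H (HFin []) p \<and> (\<forall>k. init_seg (p k) (Out H P s) \<and> eq_body n H P u s (p k))) \<or>
    (\<exists>ps. fin_path H (HFin []) ps \<and> (\<forall>x\<in>set ps. init_seg x (Out H P s) \<and> eq_body n H P u s x))"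
        using ip by blast
    next
      fix ps assume fp: "fin_path H (HFin []) ps" and al: "\<forall>y\<in>set ps. \<exists>x. y = HFin x \<and> init_seg y (Out H P s)"
      have "\<forall>y\<in>set ps. init_seg y (Out H P s) \<and> eq_body n H P u s y"
        using al eb2 by blast
      then show "(\<exists>p. inf_path H (HFin []) p \<and> (\<forall>k. init_seg (p k) (Out H P s) \<and> eq_body n H P u s (p k))) \<or>
    (\<exists>ps. fin_path H (HFin []) ps \<and> (\<forall>x\<in>set ps. init_seg x (Out H P s) \<and> eq_body n H P u s x))"
        using fp by blast
    qed
  next
    assume b: "sat_beta n H P u s"
    show "NE n H P u s" unfolding NE_def
    proof (intro ballI allI impI)
      fix i h t
      assume i: "i \<in> {1..n}" and hh: "nonterm H h \<and> P h = i \<and> init_seg (HFin h) (Out H P s)"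
        and t: "t \<in> strategies H P i"
      have hH: "HFin h \<in> H" using hh by (simp add: nonterm_def)
      have ish: "init_seg (HFin h) (Out H P s)" using hh by blast
      have "eq_body n H P u s (HFin h)"
        using b unfolding sat_beta_def EG_def
      proof (elim disjE exE conjE)
        fix p assume ip: "inf_path H (HFin []) p" and all: "\<forall>k. init_seg (p k) (Out H P s) \<and> eq_body n H P u s (p k)"
        obtain xs where xs: "p (length h) = HFin xs" "length xs = length h" using inf_path_len[OF ip] by blast
        have "init_seg (HFin xs) (Out H P s)" using all xs(1) by metis
        then have "xs = h" using init_seg_same[OF _ ish] xs(2) by blast
        then show ?thesis using all xs(1) by metis
      next
        fix ps assume fp: "fin_path H (HFin []) ps" and all: "\<forall>x\<in>set ps. init_seg x (Out H P s) \<and> eq_body n H P u s x"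
        show ?thesis
        proof (cases "length h < length ps")
          case True
          obtain xs where xs: "ps ! length h = HFin xs" "length xs = length h" using fin_path_len[OF fp True] by blast
          have mem: "ps ! length h \<in> set ps" using True by simp
          have "init_seg (HFin xs) (Out H P s)" using all mem xs(1) by metis
          then have "xs = h" using init_seg_same[OF _ ish] xs(2) by blast
          then show ?thesis using all xs(1) mem by metis
        next
          case False
          have ne: "ps \<noteq> []" using fp by (simp add: fin_path_def)
          then have l: "length ps - 1 < length ps" by simp
          obtain xs where xs: "ps ! (length ps - 1) = HFin xs" "length xs = length ps - 1"
            using fin_path_len[OF fp l] by blast
          have last: "last ps = HFin xs" using xs(1) ne by (simp add: last_conv_nth)
          have "last ps \<in> set ps" using ne by simp
          then have i1: "init_seg (HFin xs) (Out H P s)" using all last by metis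
          have i2: "init_seg (HFin (take (length xs) h)) (Out H P s)" using ish init_seg_take by blast
          have "length ps > 0" using ne by simp
          then have lx: "length xs < length h" using False xs(2) by linarith
          have "xs = take (length xs) h" using init_seg_same[OF i1 i2] lx by simp
          then have "take (Suc (length xs)) h = xs @ [h ! length xs]" using lx
            by (simp add: take_Suc_conv_app_nth)
          moreover have "HFin (take (Suc (length xs)) h) \<in> H" using take_in[OF g hH] .
          ultimately have "CA H (last ps) (HFin (take (Suc (length xs)) h))"
            using last unfolding CA_def by blast
          then show ?thesis using fp unfolding fin_path_def by blast
        qed
      qed
      then show "u i (Oh H P (HFin h) s) \<ge> u i (Oh H P (HFin h) (s(i := t)))"
        using hh t unfolding eq_body_HFin[OF g] by blast
    qed
  qed
qed

end
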